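(* Let $n\ge2$, and suppose a finite string of integers $\Sigma$ is obtained from $(2,n+1,2)$ by a finite sequence of operations, each of one of the following two types: (1) $(n_1,n_2,\dots,n_{b-1},n_b)\mapsto(2,n_1,n_2,\dots,n_{b-1},n_b+1)$; (2) $(n_1,n_2,\dots,n_{b-1},n_b)\mapsto(n_1+1,n_2,\dots,n_{b-1},n_b,2)$. Then the negative fraction of $\Sigma$ equals $m^2n/(mnk+1)$ for some integers $m>k>0$ with $\gcd(m,k)=1$. Moreover, the negative fraction of either $\Sigma$ or of the reverse of $\Sigma$ equals $$[c_s,c_{s-1},\dots,c_2,c_1,1,n-1,c_1+1,c_2,\dots,c_s]^+$$ for some $s\ge1$ and some integers $c_1,\dots,c_s\ge1$. When $s=1$ this expression is to be read as $[c_1,1,n-1,c_1+1]^+$.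
   Context: For integers $b_i\ge2$, $$[b_1,\dots,b_k]^-=b_1-\cfrac{1}{b_2-\cfrac{1}{\ddots-\cfrac{1}{b_k}}}.$$ For integers $a_i\ge1$, $$[a_1,\dots,a_h]^+=a_1+\cfrac{1}{a_2+\cfrac{1}{\ddots+\cfrac{1}{a_h}}}.$$ The negative fraction of a string $(b_1,\dots,b_k)$ is $[b_1,\dots,b_k]^-$. The reverse of $(b_1,\dots,b_k)$ is $(b_k,\dots,b_1)$. *)

theory Defs
  imports Main "HOL.Rat"
begin

text \<open>Negative continued fraction [b1,...,bk]^- (evaluated in the rationals).
  The value on the empty string is an irrelevant convention.\<close>
fun neg_cf :: "int list \<Rightarrow> rat" where
  "neg_cf [] = 0"
| "neg_cf [b] = of_int b"
| "neg_cf (b # bs) = of_int b - 1 / neg_cf bs"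

fun pos_cf :: "int list \<Rightarrow> rat" where
  "pos_cf [] = 0"
| "pos_cf [a] = of_int a"
| "pos_cf (a # as) = of_int a + 1 / pos_cf as"

definition op1 :: "int list \<Rightarrow> int list" where
  "op1 xs = 2 # butlast xs @ [last xs + 1]"

definition op2 :: "int list \<Rightarrow> int list" where
  "op2 xs = (hd xs + 1) # tl xs @ [2]"

inductive reachable :: "int \<Rightarrow> int list \<Rightarrow> bool" for n :: int where
  start: "reachable n [2, n + 1, 2]"
| step1: "reachable n xs \<Longrightarrow> reachable n (op1 xs)"
| step2: "reachable n xs \<Longrightarrow> reachable n (op2 xs)"

end

theory Submission
  imports Defs
begin

type_synonym m4 = "int \<times> int \<times> int \<times> int"

fun mm :: "m4 \<Rightarrow> m4 \<Rightarrow> m4" where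
  "mm (a,b,c,d) (e,f,g,h) = (a*e+b*g, a*f+b*h, c*e+d*g, c*f+d*h)"

lemma mm_assoc: "mm (mm x y) z = mm x (mm y z)"
  by (cases x rule: prod_cases4; cases y rule: prod_cases4; cases z rule: prod_cases4)
     (simp add: algebra_simps)

lemma mm_id1: "mm (1,0,0,1) x = x"
  by (cases x rule: prod_cases4) simp

fun negp :: "int list \<Rightarrow> m4" where
  "negp [] = (1,0,0,1)"
| "negp (b#bs) = mm (b,-1,1,0) (negp bs)"

fun posp :: "int list \<Rightarrow> m4" where
  "posp [] = (1,0,0,1)"
| "posp (b#bs) = mm (b,1,1,0) (posp bs)"

lemma negp_append: "negp (xs @ ys) = mm (negp xs) (negp ys)"
  by (induction xs) (simp_all add: mm_id1 mm_assoc)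

lemma posp_append: "posp (xs @ ys) = mm (posp xs) (posp ys)"
  by (induction xs) (simp_all add: mm_id1 mm_assoc)

fun dtr :: "m4 \<Rightarrow> m4" where "dtr (a,b,c,d) = (a,-c,-b,d)"
fun tr :: "m4 \<Rightarrow> m4" where "tr (a,b,c,d) = (a,c,b,d)"

lemma negp_rev: "negp (rev xs) = dtr (negp xs)"
proof (induction xs)
  case Nil then show ?case by simp
next
  case (Cons b bs)
  show ?case
    by (cases "negp bs" rule: prod_cases4) (simp add: negp_append Cons algebra_simps)
qed

lemma posp_rev: "posp (rev xs) = tr (posp xs)"
proof (induction xs)
  case Nil then show ?case by simp
next
  case (Cons b bs)
  show ?case
    by (cases "posp bs" rule: prod_cases4) (simp add: posp_append Cons algebra_simps)
qed

lemma neg_cf_cons: "bs \<noteq> [] \<Longrightarrow> neg_cf (b # bs) = of_int b - 1 / neg_cf bs"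
  by (cases bs) auto

lemma pos_cf_cons: "bs \<noteq> [] \<Longrightarrow> pos_cf (b # bs) = of_int b + 1 / pos_cf bs"
  by (cases bs) auto

lemma neg_cf_negp:
  "xs \<noteq> [] \<Longrightarrow> \<forall>x\<in>set xs. x \<ge> 2 \<Longrightarrow> negp xs = (p,r,q,s) \<Longrightarrow>
     q \<ge> 1 \<and> p > q \<and> neg_cf xs = of_int p / of_int q"
proof (induction xs arbitrary: p r q s)
  case Nil then show ?case by simp
next
  case (Cons b bs)
  show ?case
  proof (cases "bs = []")
    case True then show ?thesis using Cons.prems by auto
  next
    case False
    obtain p' r' q' s' where e: "negp bs = (p',r',q',s')" by (cases "negp bs" rule: prod_cases4)
    have IH: "q' \<ge> 1 \<and> p' > q' \<and> neg_cf bs = of_int p' / of_int q'"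
      using Cons.IH[OF False _ e] Cons.prems by auto
    have b2: "b \<ge> 2" using Cons.prems by auto
    have pq: "p = b*p' - q'" "q = p'" using Cons.prems(3) e by auto
    have "b*p' \<ge> 2*p'" using b2 IH by (intro mult_right_mono) auto
    then have "p > q" using pq IH by linarith
    moreover have "neg_cf (b#bs) = of_int p / of_int q"
    proof -
      have A: "(of_int p::rat) = of_int b * of_int p' - of_int q'" using pq by simp
      have B: "(of_int p'::rat) \<noteq> 0" using IH by simp
      have "neg_cf (b#bs) = of_int b - of_int q' / of_int p'" using IH neg_cf_cons[OF False, of b] by simp
      also have "\<dots> = (of_int b * of_int p' - of_int q') / of_int p'" using B by (simp add: field_simps)
      finally show ?thesis unfolding A pq(2) .
    qed
    ultimately show ?thesis using IH pq by auto
  qed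
qed

lemma pos_cf_posp:
  "xs \<noteq> [] \<Longrightarrow> \<forall>x\<in>set xs. x \<ge> 1 \<Longrightarrow> posp xs = (a,b,c,d) \<Longrightarrow>
     c \<ge> 1 \<and> a \<ge> 1 \<and> pos_cf xs = of_int a / of_int c"
proof (induction xs arbitrary: a b c d)
  case Nil then show ?case by simp
next
  case (Cons x bs)
  show ?case
  proof (cases "bs = []")
    case True then show ?thesis using Cons.prems by auto
  next
    case False
    obtain a' b' c' d' where e: "posp bs = (a',b',c',d')" by (cases "posp bs" rule: prod_cases4)
    have IH: "c' \<ge> 1 \<and> a' \<ge> 1 \<and> pos_cf bs = of_int a' / of_int c'"
      using Cons.IH[OF False _ e] Cons.prems by auto
    have x1: "x \<ge> 1" using Cons.prems by auto
    have pq: "a = x*a' + c'" "c = a'" using Cons.prems(3) e by auto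
    have "x*a' \<ge> 0" using x1 IH by simp
    then have "a \<ge> 1" using pq IH by linarith
    moreover have "pos_cf (x#bs) = of_int a / of_int c"
    proof -
      have A: "(of_int a::rat) = of_int x * of_int a' + of_int c'" using pq by simp
      have B: "(of_int a'::rat) \<noteq> 0" using IH by simp
      have "pos_cf (x#bs) = of_int x + of_int c' / of_int a'" using IH pos_cf_cons[OF False, of x] by simp
      also have "\<dots> = (of_int x * of_int a' + of_int c') / of_int a'" using B by (simp add: field_simps)
      finally show ?thesis unfolding A pq(2) .
    qed
    ultimately show ?thesis using IH pq by auto
  qed
qed


lemma negp_op1: "xs \<noteq> [] \<Longrightarrow> negp (op1 xs) = mm (mm (2,-1,1,0) (negp xs)) (1,0,-1,1)"
proof -
  assume ne: "xs \<noteq> []"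
  have e: "negp xs = mm (negp (butlast xs)) (negp [last xs])"
    using append_butlast_last_id[OF ne] negp_append by metis
  have "negp (op1 xs) = mm (2,-1,1,0) (mm (negp (butlast xs)) (negp [last xs + 1]))"
    by (simp add: op1_def negp_append)
  also have "negp [last xs + 1] = mm (negp [last xs]) (1,0,-1,1)" by simp
  finally show ?thesis using e by (simp add: mm_assoc)
qed

lemma negp_op2: "xs \<noteq> [] \<Longrightarrow> negp (op2 xs) = mm (mm (1,1,0,1) (negp xs)) (2,-1,1,0)"
proof -
  assume ne: "xs \<noteq> []"
  have e: "negp xs = mm (negp [hd xs]) (negp (tl xs))"
    using hd_Cons_tl[OF ne] by (metis append_Cons append_Nil negp_append)
  have "negp (op2 xs) = mm (negp [hd xs + 1]) (mm (negp (tl xs)) (negp [2]))"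
    by (simp add: op2_def negp_append mm_assoc)
  also have "\<dots> = mm (1,1,0,1) (mm (negp [hd xs]) (mm (negp (tl xs)) (negp [2])))"
    by (cases "mm (negp (tl xs)) (negp [2])" rule: prod_cases4) (simp add: algebra_simps)
  also have "negp [2] = (2,-1,1,0)" by simp
  finally show ?thesis using e by (simp only: mm_assoc)
qed

definition R :: "int list \<Rightarrow> int \<Rightarrow> int \<Rightarrow> int \<Rightarrow> bool" where
  "R ds m k e \<longleftrightarrow> ds \<noteq> [] \<and> (\<forall>x\<in>set ds. x \<ge> 1) \<and>
     (\<exists>a b c d. posp ds = (a,b,c,d) \<and> a+b = m \<and> c+d = k \<and> a*d-b*c = e)"

lemma R_pre: "R ds m k e \<Longrightarrow> R (1#ds) (m+k) m (-e)"
  unfolding R_def by (auto simp: algebra_simps)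

lemma R_inc: "R ds m k e \<Longrightarrow> R ((hd ds + 1) # tl ds) (m+k) k e"
proof -
  assume r: "R ds m k e"
  then have ne: "ds \<noteq> []" and pos: "\<forall>x\<in>set ds. x \<ge> 1" unfolding R_def by auto
  have e: "posp ds = mm (hd ds,1,1,0) (posp (tl ds))"
    using hd_Cons_tl[OF ne] by (metis posp.simps(2))
  have "posp ((hd ds + 1) # tl ds) = mm (1,1,0,1) (posp ds)"
    by (cases "posp (tl ds)" rule: prod_cases4) (simp add: e algebra_simps)
  moreover have "\<forall>x\<in>set ((hd ds + 1) # tl ds). x \<ge> 1"
    using pos ne by (cases ds) auto
  ultimately show ?thesis using r unfolding R_def by (auto simp: algebra_simps)
qed

definition Inv :: "int \<Rightarrow> int list \<Rightarrow> bool" where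
  "Inv n xs \<longleftrightarrow> xs \<noteq> [] \<and> (\<forall>x\<in>set xs. x \<ge> 2) \<and>
    (\<exists>k j. k > 0 \<and> j > 0 \<and> coprime k j \<and>
       negp xs = ((k+j)^2*n, -((k+j)*n*j+1), (k+j)*n*k+1, -(n*k*j+1)) \<and>
       (\<exists>ds1 ds2 e1 e2. R ds1 (k+j) k e1 \<and> R ds2 (k+j) j e2 \<and>
          e1 \<in> {1,-1} \<and> e2 \<in> {1,-1} \<and> (e1 = -1 \<or> e2 = -1)))"

lemma Inv_intro:
  assumes "xs \<noteq> []" "\<forall>x\<in>set xs. x \<ge> 2" "k > 0" "j > 0" "coprime k j"
    "negp xs = ((k+j)^2*n, -((k+j)*n*j+1), (k+j)*n*k+1, -(n*k*j+1))"
    "R ds1 (k+j) k e1" "R ds2 (k+j) j e2" "e1 \<in> {1,-1}" "e2 \<in> {1,-1}" "e1 = -1 \<or> e2 = -1"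
  shows "Inv n xs"
  unfolding Inv_def using assms by blast

lemma inv_reach: assumes n2: "n \<ge> 2" and "reachable n xs" shows "Inv n xs"
  using assms(2)
proof (induction rule: reachable.induct)
  case start
  have r: "R [1] (1+1) 1 (-1)" unfolding R_def by simp
  have np: "negp [2,n+1,2] = ((1+1)^2*n, -((1+1)*n*1+1), (1+1)*n*1+1, -(n*1*1+1))"
    by (simp add: algebra_simps)
  have ge: "\<forall>x\<in>set [2,n+1,2]. x \<ge> 2" using n2 by simp
  show ?case unfolding Inv_def
    apply (intro conjI)
      apply simp
     apply (rule ge)
    apply (rule exI[of _ 1], rule exI[of _ 1])
    using np r by auto
next
  case (step1 xs)
  then obtain k j ds1 ds2 e1 e2 where I: "xs \<noteq> []" "\<forall>x\<in>set xs. x \<ge> 2" "k > 0" "j > 0" "coprime k j"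
    "negp xs = ((k+j)^2*n, -((k+j)*n*j+1), (k+j)*n*k+1, -(n*k*j+1))"
    "R ds2 (k+j) j e2" "e1 \<in> {1,-1}" "e2 \<in> {1,-1}" "e1 = -1 \<or> e2 = -1"
    unfolding Inv_def by blast
  have ne: "op1 xs \<noteq> []" by (simp add: op1_def)
  have ge: "\<forall>x\<in>set (op1 xs). x \<ge> 2" using I(1,2)
  proof -
    have "last xs \<ge> 2" using last_in_set[OF I(1)] I(2) by blast
    then show ?thesis using I(2) by (auto simp: op1_def dest: in_set_butlastD)
  qed
  have np: "negp (op1 xs) = (((k+j)+j)^2*n, -(((k+j)+j)*n*j+1), ((k+j)+j)*n*(k+j)+1, -(n*(k+j)*j+1))"
    using negp_op1[OF I(1)] I(6) by (simp add: algebra_simps power2_eq_square)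
  have cp: "coprime (k+j) j" using I(5) by (simp add: coprime_iff_gcd_eq_1)
  have r1: "R (1#ds2) ((k+j)+j) (k+j) (-e2)" using R_pre[OF I(7)] by (simp add: algebra_simps)
  have r2: "R ((hd ds2 + 1) # tl ds2) ((k+j)+j) j e2" using R_inc[OF I(7)] .
  show ?case
    by (rule Inv_intro[OF ne ge _ _ cp np r1 r2]) (use I(3,4,9) in auto)
next
  case (step2 xs)
  then obtain k j ds1 ds2 e1 e2 where I: "xs \<noteq> []" "\<forall>x\<in>set xs. x \<ge> 2" "k > 0" "j > 0" "coprime k j"
    "negp xs = ((k+j)^2*n, -((k+j)*n*j+1), (k+j)*n*k+1, -(n*k*j+1))"
    "R ds1 (k+j) k e1" "e1 \<in> {1,-1}" "e2 \<in> {1,-1}" "e1 = -1 \<or> e2 = -1"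
    unfolding Inv_def by blast
  have ne: "op2 xs \<noteq> []" by (simp add: op2_def)
  have ge: "\<forall>x\<in>set (op2 xs). x \<ge> 2" using I(1,2)
    by (cases xs) (auto simp: op2_def)
  have np: "negp (op2 xs) = ((k+(k+j))^2*n, -((k+(k+j))*n*(k+j)+1), (k+(k+j))*n*k+1, -(n*k*(k+j)+1))"
    using negp_op2[OF I(1)] I(6) by (simp add: algebra_simps power2_eq_square)
  have cp: "coprime k (k+j)" using I(5) by (simp add: coprime_iff_gcd_eq_1)
  have r1: "R (1#ds1) (k+(k+j)) (k+j) (-e1)" using R_pre[OF I(7)] by (simp add: algebra_simps)
  have r2: "R ((hd ds1 + 1) # tl ds1) (k+(k+j)) k e1" using R_inc[OF I(7)] by (simp add: algebra_simps)
  show ?case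
    by (rule Inv_intro[OF ne ge _ _ cp np r2 r1]) (use I(3,4,8) in auto)
qed


lemma posfull:
  assumes r: "R ds m k (-1)" and n2: "n \<ge> 2"
  shows "pos_cf (ds @ [1, n-1, last ds + 1] @ tl (rev ds)) = of_int (m^2*n) / of_int (m*n*k+1)"
proof -
  obtain a b c d where P: "posp ds = (a,b,c,d)" "a+b = m" "c+d = k" "a*d-b*c = -1"
    and ne: "ds \<noteq> []" and pos: "\<forall>x\<in>set ds. x \<ge> 1" using r unfolding R_def by blast
  have rne: "rev ds \<noteq> []" using ne by simp
  have hr: "hd (rev ds) = last ds" using ne by (simp add: hd_rev)
  have e: "posp (rev ds) = mm (last ds,1,1,0) (posp (tl (rev ds)))"
    using hd_Cons_tl[OF rne] hr by (metis posp.simps(2))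
  have t: "posp (rev ds) = (a,c,b,d)" using posp_rev P(1) by simp
  have "posp ((last ds + 1) # tl (rev ds)) = mm (1,1,0,1) (posp (rev ds))"
    by (cases "posp (tl (rev ds))" rule: prod_cases4) (simp add: e algebra_simps)
  then have "posp (ds @ [1, n-1, last ds + 1] @ tl (rev ds)) =
      mm (a,b,c,d) (mm (posp [1, n-1]) (mm (1,1,0,1) (a,c,b,d)))"
    using P(1) t by (simp add: posp_append algebra_simps)
  also have "\<dots> = (n*(a+b)^2, a*(n*c+(n+1)*d) + b*((n-1)*c+n*d),
                   n*(a+b)*(c+d) + (b*c-a*d), c*(n*c+(n+1)*d) + d*((n-1)*c+n*d))"
    by (simp add: algebra_simps power2_eq_square)
  finally have F: "posp (ds @ [1, n-1, last ds + 1] @ tl (rev ds)) =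
      (m^2*n, a*(n*c+(n+1)*d) + b*((n-1)*c+n*d), m*n*k+1, c*(n*c+(n+1)*d) + d*((n-1)*c+n*d))"
    using P by (simp add: algebra_simps)
  have lpos: "last ds \<ge> 1" using pos last_in_set[OF ne] by blast
  have "\<forall>x\<in>set (ds @ [1, n-1, last ds + 1] @ tl (rev ds)). x \<ge> 1"
    using pos lpos n2 by (auto dest: list.set_sel(2)[OF rne])
  from pos_cf_posp[OF _ this F] show ?thesis by simp
qed

theorem lemma3p2:
  fixes n :: int and \<Sigma> :: "int list"
  assumes "n \<ge> 2" and "reachable n \<Sigma>"
  shows "(\<exists>m k :: int. m > k \<and> k > 0 \<and> gcd m k = 1 \<and>
            neg_cf \<Sigma> = of_int (m^2 * n) / of_int (m * n * k + 1))
       \<and> (\<exists>cs :: int list. length cs \<ge> 1 \<and> (\<forall>c \<in> set cs. c \<ge> 1) \<and>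
            (neg_cf \<Sigma> = pos_cf (rev cs @ [1, n - 1, hd cs + 1] @ tl cs) \<or>
             neg_cf (rev \<Sigma>) = pos_cf (rev cs @ [1, n - 1, hd cs + 1] @ tl cs)))"
proof -
  obtain k j ds1 ds2 e1 e2 where I: "\<Sigma> \<noteq> []" "\<forall>x\<in>set \<Sigma>. x \<ge> 2" "k > 0" "j > 0" "coprime k j"
    "negp \<Sigma> = ((k+j)^2*n, -((k+j)*n*j+1), (k+j)*n*k+1, -(n*k*j+1))"
    "R ds1 (k+j) k e1" "R ds2 (k+j) j e2" "e1 = -1 \<or> e2 = -1"
    using inv_reach[OF assms] unfolding Inv_def by blast
  have N1: "neg_cf \<Sigma> = of_int ((k+j)^2*n) / of_int ((k+j)*n*k+1)"
    using neg_cf_negp[OF I(1,2,6)] by simp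
  have nr: "negp (rev \<Sigma>) = ((k+j)^2*n, -((k+j)*n*k+1), (k+j)*n*j+1, -(n*k*j+1))"
    using negp_rev I(6) by simp
  have N2: "neg_cf (rev \<Sigma>) = of_int ((k+j)^2*n) / of_int ((k+j)*n*j+1)"
    using neg_cf_negp[OF _ _ nr] I(1,2) by simp
  have g: "gcd (k+j) k = 1" using I(5) by (simp add: coprime_iff_gcd_eq_1 gcd.commute)
  have part1: "\<exists>m k :: int. m > k \<and> k > 0 \<and> gcd m k = 1 \<and>
            neg_cf \<Sigma> = of_int (m^2 * n) / of_int (m * n * k + 1)"
    using N1 g I(3,4) by (intro exI[of _ "k+j"] exI[of _ k]) auto
  have C: "\<exists>cs :: int list. length cs \<ge> 1 \<and> (\<forall>c \<in> set cs. c \<ge> 1) \<and>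
            pos_cf (rev cs @ [1, n - 1, hd cs + 1] @ tl cs) = of_int ((k+j)^2*n) / of_int ((k+j)*n*kk+1)"
    if "R ds (k+j) kk (-1)" for ds kk
  proof (intro exI[of _ "rev ds"] conjI)
    have ne: "ds \<noteq> []" and pos: "\<forall>x\<in>set ds. x \<ge> 1" using that unfolding R_def by auto
    show "length (rev ds) \<ge> 1" using ne by (cases ds) auto
    show "\<forall>c\<in>set (rev ds). c \<ge> 1" using pos by simp
    show "pos_cf (rev (rev ds) @ [1, n - 1, hd (rev ds) + 1] @ tl (rev ds)) =
          of_int ((k+j)^2*n) / of_int ((k+j)*n*kk+1)"
      using posfull[OF that assms(1)] ne by (simp add: hd_rev)
  qed
  have part2: "\<exists>cs :: int list. length cs \<ge> 1 \<and> (\<forall>c \<in> set cs. c \<ge> 1) \<and>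
            (neg_cf \<Sigma> = pos_cf (rev cs @ [1, n - 1, hd cs + 1] @ tl cs) \<or>
             neg_cf (rev \<Sigma>) = pos_cf (rev cs @ [1, n - 1, hd cs + 1] @ tl cs))"
  proof (cases "e1 = -1")
    case True
    then show ?thesis using C[of ds1 k] I(7) N1 by metis
  next
    case False
    then have "e2 = -1" using I(9) by simp
    then show ?thesis using C[of ds2 j] I(8) N2 by metis
  qed
  show ?thesis using part1 part2 by blast
qed

end
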